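(* The Lebesgue measure $\mu$ of the set $\{xy : x,y\in C\}$ satisfies $\mu(\{xy : x,y\in C\}) \ge \tfrac{17}{21}$.
   Context: $C=\{\sum_{k\ge1}\alpha_k3^{-k}:\alpha_k\in\{0,2\}\}$ is the middle-thirds Cantor set. *)

theory Defs
  imports "HOL-Analysis.Analysis"
begin

text \<open>The middle-thirds Cantor set: all sums \<Sum>_{k\<ge>1} a_k 3^{-k} with a_k \<in> {0,2}.
  Digits are indexed from 0 here: a k stands for alpha_(k+1).\<close>
definition cantor_set :: "real set" where
  "cantor_set = {(\<Sum>k. a k / 3 ^ (Suc k)) | a :: nat \<Rightarrow> real. \<forall>k. a k \<in> {0, 2}}"

definition cantor_product_set :: "real set" where
  "cantor_product_set = {x * y | x y. x \<in> cantor_set \<and> y \<in> cantor_set}"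

end

theory Submission
  imports Defs
begin

definition digits :: "(nat \<Rightarrow> real) \<Rightarrow> bool" where
  "digits d \<longleftrightarrow> (\<forall>k. d k \<in> {0, 2})"

lemma dig_bound: "x \<in> {0, 2::real} \<Longrightarrow> norm (x / 3 ^ Suc k) \<le> 2 * (1/3) ^ k"
  by (auto simp: power_divide divide_simps)

lemma summable_digits: "digits d \<Longrightarrow> summable (\<lambda>k. d k / 3 ^ Suc k)"
proof (rule summable_comparison_test)
  assume "digits d"
  show "\<exists>N. \<forall>n\<ge>N. norm (d n / 3 ^ Suc n) \<le> 2 * (1/3) ^ n"
    using \<open>digits d\<close> unfolding digits_def
    by (intro exI[of _ 0] allI impI dig_bound) simp
  show "summable (\<lambda>n. 2 * (1/3::real) ^ n)"
    by (intro summable_mult summable_geometric) simp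
qed

lemma compact_K: "compact {d :: nat \<Rightarrow> real. \<forall>k. d k \<in> {0, 2}}"
proof -
  have "compactin (product_topology (\<lambda>i. euclidean) UNIV) (PiE UNIV (\<lambda>_::nat. {0::real, 2}))"
    by (subst compactin_PiE) auto
  moreover have "PiE UNIV (\<lambda>_::nat. {0::real, 2}) = {d. \<forall>k. d k \<in> {0, 2}}"
    by (auto simp: PiE_def)
  ultimately show ?thesis by (simp add: euclidean_product_topology)
qed

lemma cont_F: "continuous_on {d :: nat \<Rightarrow> real. \<forall>k. d k \<in> {0, 2}} (\<lambda>d. \<Sum>k. d k / 3 ^ Suc k)"
proof (rule uniform_limit_theorem)
  show "uniform_limit {d :: nat \<Rightarrow> real. \<forall>k. d k \<in> {0, 2}} (\<lambda>n d. \<Sum>k<n. d k / 3 ^ Suc k) (\<lambda>d. \<Sum>k. d k / 3 ^ Suc k) sequentially"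
    by (rule Weierstrass_m_test[where M = "\<lambda>n. 2 * (1/3) ^ n"])
       (metis (mono_tags) dig_bound mem_Collect_eq, intro summable_mult summable_geometric, simp)
  show "\<forall>\<^sub>F n in sequentially. continuous_on {d :: nat \<Rightarrow> real. \<forall>k. d k \<in> {0, 2}} (\<lambda>d. \<Sum>k<n. d k / 3 ^ Suc k)"
  proof (intro always_eventually allI)
    have c: "\<And>i. continuous_on {d :: nat \<Rightarrow> real. \<forall>k. d k \<in> {0, 2}} (\<lambda>d. d i)"
      by (rule continuous_on_subset[OF continuous_on_product_coordinates]) simp
    show "continuous_on {d :: nat \<Rightarrow> real. \<forall>k. d k \<in> {0, 2}} (\<lambda>d. \<Sum>k<n. d k / 3 ^ Suc k)" for n
      by (intro continuous_on_sum continuous_on_divide c continuous_on_const) simp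
  qed
qed simp

lemma cantor_image: "cantor_set = (\<lambda>d. \<Sum>k. d k / 3 ^ Suc k) ` {d. \<forall>k. d k \<in> {0, 2}}"
  unfolding cantor_set_def by auto

lemma compact_C: "compact cantor_set"
  unfolding cantor_image by (intro compact_continuous_image cont_F compact_K)

lemma C_cons:
  assumes x: "x \<in> cantor_set" and i: "i \<in> {0, 2::real}"
  shows "i / 3 + x / 3 \<in> cantor_set"
proof -
  obtain d where d: "\<forall>k. d k \<in> {0, 2}" and xd: "x = (\<Sum>k. d k / 3 ^ Suc k)"
    using x unfolding cantor_set_def by blast
  define e where "e = case_nat i d"
  have e: "\<forall>k. e k \<in> {0, 2}" using d i by (auto simp: e_def split: nat.split)
  have s: "summable (\<lambda>k. e k / 3 ^ Suc k)"
    using summable_digits[of e] e by (simp add: digits_def)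
  have sd: "summable (\<lambda>k. d k / 3 ^ Suc k)"
    using summable_digits[of d] d by (simp add: digits_def)
  have "(\<Sum>k. e k / 3 ^ Suc k) = e 0 / 3 + (\<Sum>k. e (Suc k) / 3 ^ Suc (Suc k))"
    using suminf_split_head[OF s] by simp
  also have "(\<Sum>k. e (Suc k) / 3 ^ Suc (Suc k)) = (\<Sum>k. d k / 3 ^ Suc k) / 3"
    using suminf_divide[OF sd, of 3] by (simp add: e_def)
  finally have "(\<Sum>k. e k / 3 ^ Suc k) = i / 3 + x / 3" using xd by (simp add: e_def)
  then show ?thesis using e unfolding cantor_set_def by (intro CollectI exI[of _ e]) simp
qed

lemma C_div3: "x \<in> cantor_set \<Longrightarrow> x / 3 \<in> cantor_set"
  using C_cons[of x 0] by simp

lemma C_pow: "x \<in> cantor_set \<Longrightarrow> (1/3) ^ k * x \<in> cantor_set"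
proof (induction k)
  case (Suc k)
  then show ?case using C_div3[OF Suc.IH[OF Suc.prems]] by (simp add: field_simps)
qed simp

lemma C_zero: "0 \<in> cantor_set"
  unfolding cantor_set_def by (rule CollectI, rule exI[of _ "\<lambda>_. 0"]) simp

definition good :: "real \<Rightarrow> real \<Rightarrow> real \<Rightarrow> bool" where
  "good a b s \<longleftrightarrow> 0 < s \<and> 0 < a \<and> 0 < b \<and> 2 * s \<le> \<bar>a - b\<bar> \<and> max a b + s \<le> 3 * min a b"

definition rng :: "real \<Rightarrow> real \<Rightarrow> real \<Rightarrow> real \<Rightarrow> bool" where
  "rng a b s z \<longleftrightarrow> a * b \<le> z \<and> z \<le> (a + s) * (b + s)"

lemma step_lt:
  assumes ab: "a < b" and g: "good a b s" and r: "rng a b s z"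
  shows "\<exists>i j. i \<in> {0, 2} \<and> j \<in> {0, 2} \<and> good (a + i * (s/3)) (b + j * (s/3)) (s/3)
           \<and> rng (a + i * (s/3)) (b + j * (s/3)) (s/3) z"
proof -
  define h where "h = s / 3"
  have s: "s = 3 * h" by (simp add: h_def)
  have h0: "0 < h" and a0: "0 < a" and b1: "a + 6 * h \<le> b" and b2: "b + 3 * h \<le> 3 * a"
    using g ab unfolding good_def s by auto
  have gd: "good (a + i * h) (b + j * h) h" if "i \<in> {0, 2}" "j \<in> {0, 2}" for i j
    using that h0 a0 b1 b2 unfolding good_def by (auto simp: abs_if max_def min_def)
  have z1: "a * b \<le> z" and z2: "z \<le> (a + 3*h) * (b + 3*h)" using r unfolding rng_def s by auto
  have f1: "a * (b + 2*h) \<le> (a + h) * (b + h)"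
  proof -
    have "0 \<le> h * (b - a) + h * h" using h0 b1 by (intro add_nonneg_nonneg mult_nonneg_nonneg) auto
    then show ?thesis by (simp add: algebra_simps)
  qed
  have f2: "(a + 2*h) * b \<le> (a + h) * (b + 3*h)"
  proof -
    have "0 \<le> h * (3*a + 3*h - b)" using h0 b2 by (intro mult_nonneg_nonneg) auto
    then show ?thesis by (simp add: algebra_simps)
  qed
  have f3: "(a + 2*h) * (b + 2*h) \<le> (a + 3*h) * (b + h)"
  proof -
    have "0 \<le> h * (b - a - h)" using h0 b1 by (intro mult_nonneg_nonneg) auto
    then show ?thesis by (simp add: algebra_simps)
  qed
  have f4: "a * (b + 2*h) \<le> (a + 2*h) * b"
  proof -
    have "0 \<le> h * (b - a)" using h0 b1 by (intro mult_nonneg_nonneg) auto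
    then show ?thesis by (simp add: algebra_simps)
  qed
  have "\<exists>i j. i \<in> {0, 2} \<and> j \<in> {0, 2} \<and> rng (a + i * h) (b + j * h) h z"
  proof (cases "z \<le> (a + h) * (b + h)")
    case True
    then show ?thesis using z1 by (intro exI[of _ 0] exI[of _ 0]) (simp add: rng_def)
  next
    case c1: False
    show ?thesis
    proof (cases "z \<le> (a + h) * (b + 3*h)")
      case True
      then show ?thesis using c1 f1 by (intro exI[of _ 0] exI[of _ 2]) (simp add: rng_def algebra_simps)
    next
      case c2: False
      show ?thesis
      proof (cases "z \<le> (a + 3*h) * (b + h)")
        case True
        then show ?thesis using c2 f2 by (intro exI[of _ 2] exI[of _ 0]) (simp add: rng_def algebra_simps)
      next
        case c3: False
        then show ?thesis using z2 f3 by (intro exI[of _ 2] exI[of _ 2]) (simp add: rng_def algebra_simps)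
      qed
    qed
  qed
  then show ?thesis using gd unfolding h_def by blast
qed

lemma step:
  assumes g: "good a b s" and r: "rng a b s z"
  shows "\<exists>i j. i \<in> {0, 2} \<and> j \<in> {0, 2} \<and> good (a + i * (s/3)) (b + j * (s/3)) (s/3)
           \<and> rng (a + i * (s/3)) (b + j * (s/3)) (s/3) z"
proof (cases "a < b")
  case True
  then show ?thesis using step_lt g r by blast
next
  case False
  then have ba: "b < a" using g unfolding good_def by auto
  have "good b a s" using g unfolding good_def by (auto simp: abs_minus_commute max.commute min.commute)
  moreover have "rng b a s z" using r unfolding rng_def by (simp add: mult.commute)
  ultimately obtain i j where "i \<in> {0, 2}" "j \<in> {0, 2}" "good (b + i * (s/3)) (a + j * (s/3)) (s/3)"
       "rng (b + i * (s/3)) (a + j * (s/3)) (s/3) z"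
    using step_lt[OF ba] by blast
  then show ?thesis unfolding good_def rng_def
    by (intro exI[of _ j] exI[of _ i]) (auto simp: abs_minus_commute max.commute min.commute mult.commute)
qed

definition Aset :: "real \<Rightarrow> real \<Rightarrow> real set" where
  "Aset a s = {a + s * c | c. c \<in> cantor_set}"

lemma cover:
  assumes g: "good a b s" and r: "rng a b s z"
  shows "\<exists>x y. x \<in> Aset a s \<and> y \<in> Aset b s \<and> z = x * y"
proof -
  define P where "P = (\<lambda>n (p :: real \<times> real). (n = 0 \<longrightarrow> p = (a, b)) \<and>
      good (fst p) (snd p) (s / 3 ^ n) \<and> rng (fst p) (snd p) (s / 3 ^ n) z)"
  define Q where "Q = (\<lambda>n (p :: real \<times> real) q. \<exists>i j. i \<in> {0, 2::real} \<and> j \<in> {0, 2::real} \<and>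
      fst q = fst p + i * (s / 3 ^ Suc n) \<and> snd q = snd p + j * (s / 3 ^ Suc n))"
  have "\<exists>f. \<forall>n. P n (f n) \<and> Q n (f n) (f (Suc n))"
  proof (rule dependent_nat_choice)
    show "\<exists>x. P 0 x" using g r unfolding P_def by (intro exI[of _ "(a, b)"]) simp
  next
    fix p n assume "P n p"
    then have "good (fst p) (snd p) (s / 3 ^ n)" "rng (fst p) (snd p) (s / 3 ^ n) z"
      unfolding P_def by auto
    from step[OF this] obtain i j where ij: "i \<in> {0, 2}" "j \<in> {0, 2}"
      "good (fst p + i * (s / 3 ^ n / 3)) (snd p + j * (s / 3 ^ n / 3)) (s / 3 ^ n / 3)"
      "rng (fst p + i * (s / 3 ^ n / 3)) (snd p + j * (s / 3 ^ n / 3)) (s / 3 ^ n / 3) z"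
      by blast
    have e: "s / 3 ^ n / 3 = s / 3 ^ Suc n" by simp
    show "\<exists>q. P (Suc n) q \<and> Q n p q"
      using ij unfolding P_def Q_def e
      by (intro exI[of _ "(fst p + i * (s / 3 ^ Suc n), snd p + j * (s / 3 ^ Suc n))"]) auto
  qed
  then obtain f where f: "\<And>n. P n (f n)" "\<And>n. Q n (f n) (f (Suc n))" by blast
  have s0: "0 < s" using g unfolding good_def by auto
  define d where "d n = (fst (f (Suc n)) - fst (f n)) / (s / 3 ^ Suc n)" for n
  define e where "e n = (snd (f (Suc n)) - snd (f n)) / (s / 3 ^ Suc n)" for n
  have de: "d n \<in> {0, 2} \<and> e n \<in> {0, 2}" for n
    using f(2)[of n] s0 unfolding Q_def d_def e_def by auto
  have fd: "fst (f n) = a + s * (\<Sum>k<n. d k / 3 ^ Suc k)" for n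
  proof (induction n)
    case 0 then show ?case using f(1)[of 0] unfolding P_def by simp
  next
    case (Suc n)
    have "fst (f (Suc n)) = fst (f n) + d n * (s / 3 ^ Suc n)"
      using s0 unfolding d_def by simp
    then show ?case using Suc by (simp add: algebra_simps sum_distrib_left)
  qed
  have fe: "snd (f n) = b + s * (\<Sum>k<n. e k / 3 ^ Suc k)" for n
  proof (induction n)
    case 0 then show ?case using f(1)[of 0] unfolding P_def by simp
  next
    case (Suc n)
    have "snd (f (Suc n)) = snd (f n) + e n * (s / 3 ^ Suc n)"
      using s0 unfolding e_def by simp
    then show ?case using Suc by (simp add: algebra_simps sum_distrib_left)
  qed
  define x where "x = a + s * (\<Sum>k. d k / 3 ^ Suc k)"
  define y where "y = b + s * (\<Sum>k. e k / 3 ^ Suc k)"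
  have xC: "x \<in> Aset a s" unfolding x_def Aset_def cantor_set_def using de by blast
  have yC: "y \<in> Aset b s" unfolding y_def Aset_def cantor_set_def using de by blast
  have lx: "(\<lambda>n. fst (f n)) \<longlonglongrightarrow> x"
    unfolding fd x_def using de
    by (intro tendsto_intros summable_LIMSEQ summable_digits) (simp add: digits_def)
  have ly: "(\<lambda>n. snd (f n)) \<longlonglongrightarrow> y"
    unfolding fe y_def using de
    by (intro tendsto_intros summable_LIMSEQ summable_digits) (simp add: digits_def)
  have l0: "(\<lambda>n. s / 3 ^ n) \<longlonglongrightarrow> 0" by (rule LIMSEQ_divide_realpow_zero) simp
  have l1: "(\<lambda>n. fst (f n) * snd (f n)) \<longlonglongrightarrow> x * y" using lx ly by (intro tendsto_intros)
  have l2: "(\<lambda>n. (fst (f n) + s / 3 ^ n) * (snd (f n) + s / 3 ^ n)) \<longlonglongrightarrow> (x + 0) * (y + 0)"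
    using lx ly l0 by (intro tendsto_intros)
  have "x * y \<le> z"
    by (rule LIMSEQ_le_const2[OF l1]) (use f(1) in \<open>auto simp: P_def rng_def\<close>)
  moreover have "z \<le> x * y"
    by (rule LIMSEQ_le_const[OF l2[simplified]]) (use f(1) in \<open>auto simp: P_def rng_def\<close>)
  ultimately show ?thesis using xC yC by auto
qed


definition Pset :: "real \<Rightarrow> real \<Rightarrow> real \<Rightarrow> real set" where
  "Pset t a s = {t * x * y | x y. x \<in> Aset a s \<and> y \<in> Aset a s}"

lemma compact_Aset: "compact (Aset a s)"
proof -
  have "Aset a s = (\<lambda>c. a + s * c) ` cantor_set" unfolding Aset_def by auto
  then show ?thesis by (simp add: compact_continuous_image continuous_intros compact_C)
qed

lemma compact_Pset: "compact (Pset t a s)"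
proof -
  have "Pset t a s = (\<lambda>p. t * fst p * snd p) ` (Aset a s \<times> Aset a s)" unfolding Pset_def by force
  then show ?thesis
    by (simp add: compact_continuous_image continuous_intros compact_Aset compact_Times)
qed

lemma Aset_left: "Aset a (s/3) \<subseteq> Aset a s"
proof
  fix x assume "x \<in> Aset a (s/3)"
  then obtain c where c: "c \<in> cantor_set" "x = a + s/3 * c" unfolding Aset_def by blast
  have "0/3 + c/3 \<in> cantor_set" by (rule C_cons[OF c(1)]) simp
  moreover have "x = a + s * (0/3 + c/3)" using c by simp
  ultimately show "x \<in> Aset a s" unfolding Aset_def by blast
qed

lemma Aset_right: "Aset (a + 2 * s / 3) (s / 3) \<subseteq> Aset a s"
proof
  fix x assume "x \<in> Aset (a + 2* s/3) (s/3)"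
  then obtain c where c: "c \<in> cantor_set" "x = a + 2* s/3 + s/3 * c" unfolding Aset_def by blast
  have "2/3 + c/3 \<in> cantor_set" by (rule C_cons[OF c(1)]) simp
  moreover have "x = a + s * (2/3 + c/3)" using c by (simp add: algebra_simps)
  ultimately show "x \<in> Aset a s" unfolding Aset_def by blast
qed

lemma Pset_mono: "Aset a' s' \<subseteq> Aset a s \<Longrightarrow> Pset t a' s' \<subseteq> Pset t a s"
  unfolding Pset_def by blast

lemma offdiag:
  assumes t: "0 < t" and s: "0 < s" "s \<le> 2 * a"
    and z: "t * (a * (a + 2* s/3)) \<le> z" "z \<le> t * ((a + s/3) * (a + s))"
  shows "z \<in> Pset t a s"
proof -
  have g: "good a (a + 2* s/3) (s/3)" using s unfolding good_def by auto
  have r: "rng a (a + 2* s/3) (s/3) (z / t)" using z t unfolding rng_def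
    by (auto simp: field_simps)
  obtain x y where xy: "x \<in> Aset a (s/3)" "y \<in> Aset (a + 2* s/3) (s/3)" "z / t = x * y"
    using cover[OF g r] by blast
  have "x \<in> Aset a s" "y \<in> Aset a s" using xy Aset_left Aset_right by blast+
  moreover have "z = t * x * y" using xy(3) t by (simp add: field_simps)
  ultimately show ?thesis unfolding Pset_def by blast
qed

lemma bdd_diff: "bounded ({l..u::real} - X)"
  by (meson Diff_subset bounded_subset compact_Icc compact_imp_bounded)

lemma meas_diff: "{l..u::real} - Pset t a s \<in> lmeasurable"
  by (intro bounded_set_imp_lmeasurable bdd_diff sets.Diff) (auto intro: fmeasurableD[OF lmeasurable_compact[OF compact_Pset]])

lemma Ubound:
  assumes "0 < t" "0 < s" "s \<le> 2 * a" "a + s \<le> 1"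
  shows "measure lebesgue ({t*a^2..t*(a+s)^2} - Pset t a s) \<le> t * (s^2/7 + 2* s*(2/3)^n)"
  using assms
proof (induction n arbitrary: a s)
  case 0
  have a0: "0 < a" using 0 by auto
  have "measure lebesgue ({t*a^2..t*(a+s)^2} - Pset t a s) \<le> measure lebesgue {t*a^2..t*(a+s)^2}"
    by (intro measure_mono_fmeasurable fmeasurableD[OF meas_diff] lmeasurable_compact compact_Icc) auto
  also have "\<dots> = t*(a+s)^2 - t*a^2"
  proof -
    have "a^2 \<le> (a+s)^2" using a0 0 by (intro power_mono) auto
    then show ?thesis using 0 by simp
  qed
  also have "\<dots> = t * (s * (2*a+s))" by (simp add: algebra_simps power2_eq_square)
  also have "\<dots> \<le> t * (s * 2)"
    using 0 by (intro mult_left_mono) auto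
  also have "\<dots> \<le> t * (s^2/7 + 2* s*(2/3)^0)"
    using 0 by (intro mult_left_mono) auto
  finally show ?case .
next
  case (Suc n)
  have a0: "0 < a" using Suc by auto
  define L where "L = {t*a^2..t*(a+s/3)^2} - Pset t a (s/3)"
  define R where "R = {t*(a+2* s/3)^2..t*(a+2* s/3+s/3)^2} - Pset t (a+2* s/3) (s/3)"
  define Gp where "Gp = {t*((a+s/3)*(a+s)) .. t*(a+2* s/3)^2}"
  have mL: "measure lebesgue L \<le> t * ((s/3)^2/7 + 2*(s/3)*(2/3)^n)"
    unfolding L_def using Suc by (intro Suc.IH) auto
  have mR: "measure lebesgue R \<le> t * ((s/3)^2/7 + 2*(s/3)*(2/3)^n)"
    unfolding R_def using Suc by (intro Suc.IH) auto
  have gle: "(a+s/3)*(a+s) \<le> (a+2* s/3)^2"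
  proof - have ss: "0 \<le> s * s" by simp
    have "a * s + (a * s + s * s) / 3 \<le> a * (s * 4) / 3 + s * (s * 4) / 9" using ss by (simp add: field_simps)
    then show ?thesis by (simp add: algebra_simps power2_eq_square) qed
  have mG: "measure lebesgue Gp = t * (s^2/9)"
  proof -
    have "t*((a+s/3)*(a+s)) \<le> t*(a+2* s/3)^2" using gle Suc by (intro mult_left_mono) auto
    then have "measure lebesgue Gp = t*(a+2* s/3)^2 - t*((a+s/3)*(a+s))" unfolding Gp_def by simp
    also have "\<dots> = t * (s^2/9)" by (simp add: algebra_simps power2_eq_square)
    finally show ?thesis .
  qed
  have sub: "{t*a^2..t*(a+s)^2} - Pset t a s \<subseteq> L \<union> Gp \<union> R"
  proof
    fix z assume z: "z \<in> {t*a^2..t*(a+s)^2} - Pset t a s"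
    have PL: "Pset t a (s/3) \<subseteq> Pset t a s" by (rule Pset_mono[OF Aset_left])
    have PR: "Pset t (a+2* s/3) (s/3) \<subseteq> Pset t a s" by (rule Pset_mono[OF Aset_right])
    have e: "a+2* s/3+s/3 = a + s" by simp
    show "z \<in> L \<union> Gp \<union> R"
    proof (cases "z \<le> t*(a+s/3)^2")
      case True then show ?thesis using z PL unfolding L_def by auto
    next
      case c1: False
      show ?thesis
      proof (cases "t*(a+2* s/3)^2 \<le> z")
        case True then show ?thesis using z PR unfolding R_def e by auto
      next
        case c2: False
        show ?thesis
        proof (cases "z \<le> t * ((a + s/3) * (a + s))")
          case True
          have aa: "a * (a + 2* s/3) \<le> (a+s/3)^2" by (simp add: algebra_simps power2_eq_square)
          have tt: "t * (a * (a + 2* s/3)) \<le> t*(a+s/3)^2" using aa Suc by (intro mult_left_mono) auto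
          have "z \<in> Pset t a s" by (rule offdiag) (use True c1 Suc.prems tt in linarith)+
          then show ?thesis using z by auto
        next
          case False then show ?thesis using c2 unfolding Gp_def by auto
        qed
      qed
    qed
  qed
  have mLs: "L \<in> sets lebesgue" "R \<in> sets lebesgue" "Gp \<in> sets lebesgue"
    unfolding L_def R_def Gp_def using fmeasurableD[OF meas_diff] by auto
  have "measure lebesgue ({t*a^2..t*(a+s)^2} - Pset t a s) \<le> measure lebesgue (L \<union> Gp \<union> R)"
  proof (rule measure_mono_fmeasurable[OF sub])
    show "{t*a^2..t*(a+s)^2} - Pset t a s \<in> sets lebesgue" using fmeasurableD[OF meas_diff] by auto
    have "bounded (L \<union> Gp \<union> R)" unfolding L_def R_def Gp_def by (simp add: bdd_diff)
    then show "L \<union> Gp \<union> R \<in> lmeasurable" using mLs by (intro bounded_set_imp_lmeasurable) auto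
  qed
  also have "\<dots> \<le> measure lebesgue L + measure lebesgue Gp + measure lebesgue R"
    using mLs by (meson add_right_mono measure_Un_le order_trans sets.Un)
  also have "\<dots> \<le> t * ((s/3)^2/7 + 2*(s/3)*(2/3)^n) + t * (s^2/9) + t * ((s/3)^2/7 + 2*(s/3)*(2/3)^n)"
    using mL mR mG by linarith
  also have "\<dots> = t * (s^2/7 + 2* s*(2/3)^Suc n)" by (simp add: field_simps power2_eq_square)
  finally show ?case .
qed


lemma Ulim:
  assumes "0 < t" "0 < s" "s \<le> 2 * a" "a + s \<le> 1"
  shows "measure lebesgue ({t*a^2..t*(a+s)^2} - Pset t a s) \<le> t * (s^2/7)"
proof -
  have l: "(\<lambda>n. t * (s^2/7 + 2* s*(2/3)^n)) \<longlonglongrightarrow> t * (s^2/7 + 2* s*0)"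
    by (intro tendsto_intros LIMSEQ_realpow_zero) auto
  show ?thesis
    using LIMSEQ_le_const[OF l, of "measure lebesgue ({t*a^2..t*(a+s)^2} - Pset t a s)"]
      Ubound[OF assms] by simp
qed

lemma find_k:
  assumes "0 < (x::real)" "x \<le> 1"
  shows "\<exists>k. (1/3)^Suc k \<le> x \<and> x \<le> (1/3)^k"
proof -
  obtain n where n: "(1/3::real)^n < x" using real_arch_pow_inv[of x "1/3"] assms by auto
  have "(1/3::real)^n < x \<Longrightarrow> \<exists>k. (1/3)^Suc k \<le> x \<and> x \<le> (1/3)^k" for n
  proof (induction n)
    case 0 then show ?case using assms by simp
  next
    case (Suc n)
    show ?case
    proof (cases "x \<le> (1/3)^n")
      case True then show ?thesis using Suc.prems by (intro exI[of _ n]) simp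
    next
      case False then show ?thesis using Suc.IH by simp
    qed
  qed
  then show ?thesis using n by blast
qed

lemma compact_G: "compact cantor_product_set"
proof -
  have e: "cantor_product_set = (\<lambda>p. fst p * snd p) ` (cantor_set \<times> cantor_set)"
    unfolding cantor_product_set_def by force
  show ?thesis unfolding e
    by (intro compact_continuous_image continuous_intros compact_C compact_Times)
qed

lemma Aset_C: "Aset (2/3) (1/3) \<subseteq> cantor_set"
proof
  fix x assume "x \<in> Aset (2/3) (1/3)"
  then obtain c where c: "c \<in> cantor_set" "x = 2/3 + 1/3 * c" unfolding Aset_def by blast
  have "2/3 + c/3 \<in> cantor_set" by (rule C_cons[OF c(1)]) simp
  then show "x \<in> cantor_set" using c by simp
qed

lemma Pset_G: "Pset ((1/3)^k) (2/3) (1/3) \<subseteq> cantor_product_set"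
proof
  fix z assume "z \<in> Pset ((1/3)^k) (2/3) (1/3)"
  then obtain x y where xy: "x \<in> Aset (2/3) (1/3)" "y \<in> Aset (2/3) (1/3)" "z = (1/3)^k * x * y"
    unfolding Pset_def by blast
  have "(1/3)^k * x \<in> cantor_set" using xy Aset_C by (intro C_pow) auto
  moreover have "y \<in> cantor_set" using xy Aset_C by auto
  ultimately show "z \<in> cantor_product_set" unfolding cantor_product_set_def using xy(3) by blast
qed

theorem theorem3p9:
  shows "measure lebesgue cantor_product_set \<ge> 17 / 21"
proof -
  define G where "G = cantor_product_set"
  define t :: "nat \<Rightarrow> real" where "t k = (1/3)^k" for k
  define E where "E k = {(1/3::real)^Suc k .. t k * (4/9)} \<union>
     ({t k * (2/3)^2 .. t k * (2/3 + 1/3)^2} - Pset (t k) (2/3) (1/3))" for k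
  have t0: "0 < t k" for k by (simp add: t_def)
  have Es: "E k \<in> lmeasurable" for k
  proof -
    have "bounded (E k)" unfolding E_def by (simp add: bdd_diff)
    moreover have "E k \<in> sets lebesgue" unfolding E_def using fmeasurableD[OF meas_diff] by auto
    ultimately show ?thesis by (rule bounded_set_imp_lmeasurable)
  qed
  have mE: "measure lebesgue (E k) \<le> (1/3)^k * (8/63)" for k
  proof -
    have "measure lebesgue (E k) \<le> measure lebesgue {(1/3::real)^Suc k .. t k * (4/9)}
       + measure lebesgue ({t k * (2/3)^2 .. t k * (2/3 + 1/3)^2} - Pset (t k) (2/3) (1/3))"
      unfolding E_def using fmeasurableD[OF meas_diff] by (intro measure_Un_le) auto
    also have "\<dots> \<le> (t k * (4/9) - (1/3)^Suc k) + t k * ((1/3)^2/7)"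
    proof (intro add_mono)
      have "(1/3::real)^Suc k \<le> t k * (4/9)" by (simp add: t_def)
      then show "measure lebesgue {(1/3::real)^Suc k .. t k * (4/9)} \<le> t k * (4/9) - (1/3)^Suc k" by simp
      show "measure lebesgue ({t k * (2/3)^2 .. t k * (2/3 + 1/3)^2} - Pset (t k) (2/3) (1/3))
          \<le> t k * ((1/3)^2/7)" by (rule Ulim[OF t0]) auto
    qed
    also have "\<dots> = (1/3)^k * (8/63)" by (simp add: t_def field_simps)
    finally show ?thesis .
  qed
  have sums: "(\<lambda>k. (1/3::real)^k * (8/63)) sums (1/(1 - 1/3) * (8/63))"
    by (intro sums_mult2 geometric_sums) simp
  have "emeasure lebesgue (\<Union>k. E k) \<le> (\<Sum>k. emeasure lebesgue (E k))"
    using Es by (intro emeasure_subadditive_countably) (auto intro: fmeasurableD)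
  also have "\<dots> \<le> (\<Sum>k. ennreal ((1/3)^k * (8/63)))"
    using Es mE by (intro suminf_le summableI) (simp add: emeasure_eq_measure2 ennreal_leI)
  also have "\<dots> = ennreal (4/21)"
  proof -
    have "(\<Sum>k. ennreal ((1/3)^k * (8/63))) = ennreal (\<Sum>k. (1/3::real)^k * (8/63))"
      by (rule suminf_ennreal2[OF _ sums_summable[OF sums]]) simp
    also have "(\<Sum>k. (1/3::real)^k * (8/63)) = 4/21"
      using sums_unique[OF sums] by simp
    finally show ?thesis .
  qed
  finally have eU: "emeasure lebesgue (\<Union>k. E k) \<le> ennreal (4/21)" .
  have UE: "(\<Union>k. E k) \<in> lmeasurable"
  proof (rule fmeasurableI)
    show "(\<Union>k. E k) \<in> sets lebesgue" using Es by (intro sets.countable_UN) (auto intro: fmeasurableD)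
    show "emeasure lebesgue (\<Union>k. E k) < \<infinity>"
      using order.strict_trans1[OF eU ennreal_less_top] by (simp add: infinity_ennreal_def)
  qed
  have mU: "measure lebesgue (\<Union>k. E k) \<le> 4/21"
    using eU emeasure_eq_measure2[OF UE] by simp
  have GE: "{0..1} \<subseteq> G \<union> (\<Union>k. E k)"
  proof
    fix x :: real assume x: "x \<in> {0..1}"
    show "x \<in> G \<union> (\<Union>k. E k)"
    proof (cases "x \<in> G")
      case True then show ?thesis by simp
    next
      case False
      have "0 \<in> G" unfolding G_def cantor_product_set_def using C_zero by force
      then have "0 < x" using x False by (cases "x = 0") auto
      then obtain k where k: "(1/3)^Suc k \<le> x" "x \<le> (1/3)^k" using find_k x by auto
      have "x \<in> E k"
      proof (cases "x \<le> t k * (4/9)")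
        case True then show ?thesis using k unfolding E_def by simp
      next
        case False
        then have "x \<notin> Pset (t k) (2/3) (1/3)" using Pset_G \<open>x \<notin> G\<close> unfolding G_def t_def by blast
        then show ?thesis using k False unfolding E_def by (simp add: t_def power2_eq_square)
      qed
      then show ?thesis by blast
    qed
  qed
  have GL: "G \<in> lmeasurable" unfolding G_def by (rule lmeasurable_compact[OF compact_G])
  have "1 = measure lebesgue {0..1::real}" by simp
  also have "\<dots> \<le> measure lebesgue (G \<union> (\<Union>k. E k))"
    using GE GL UE by (intro measure_mono_fmeasurable) auto
  also have "\<dots> \<le> measure lebesgue G + measure lebesgue (\<Union>k. E k)"
    using GL UE by (intro measure_Un_le) auto
  finally show ?thesis using mU unfolding G_def by linarith
qed

end
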